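(* Let $\rho_A,\rho_B,\rho_O,\rho_T>0$, $\boldsymbol\alpha\in\mathbb R^c$, $\boldsymbol v_1\in\mathbb R^d$, $\mathcal Z=\{\boldsymbol z_x\}_{x\in[c]}\in(\mathbb R^d)^c$, and $\boldsymbol z'_x=\rho_A\boldsymbol z_x+\frac{\rho_B}{d_x}\sum_{y\in[c]}w_{x,y}\boldsymbol z_y+\rho_O\sum_{y\in[c]}\alpha_y\boldsymbol z_y+\rho_T\boldsymbol v_1$; let $\boldsymbol Z,\boldsymbol Z'\in\mathbb R^{d\times c}$ have columns $\boldsymbol z_x$, $\boldsymbol z'_x$. Let $\boldsymbol M=\rho_A\boldsymbol I+\rho_B\boldsymbol D^{-1/2}\boldsymbol W\boldsymbol D^{-1/2}$ with eigenvalues $\lambda_1,\dots,\lambda_c$ in non-increasing order of absolute value and orthonormal eigen-decomposition $\boldsymbol M=[\boldsymbol f\ \boldsymbol X\ \boldsymbol Y]\,\mathrm{diag}(\lambda_1,\boldsymbol\Lambda,\boldsymbol\Lambda')\,[\boldsymbol f\ \boldsymbol X\ \boldsymbol Y]^\top$, where $\boldsymbol X$ holds eigenvectors for $\lambda_2,\dots,\lambda_q$ and $\boldsymbol Y$ for $\lambda_{q+1},\dots,\lambda_c$ ($2\le q<c$); let $\delta_{\boldsymbol M}=|\lambda_q/\lambda_{q+1}|$. Let $\sigma:\mathbb R^d\to\mathbb R^d$ be a great mapping w.r.t. $(\gamma_1,\gamma_2,\{\boldsymbol Z'\},\boldsymbol X)$ and w.r.t. $(\gamma_1',\gamma_2',\{\boldsymbol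 Z'\},\boldsymbol Y)$. Then, provided $\lambda_{q+1}\ne0$, $\|\boldsymbol Z\boldsymbol D^{1/2}\boldsymbol X\|\ne0$ and $\|\boldsymbol Z\boldsymbol D^{1/2}\boldsymbol Y\|\ne0$, $$\frac{\|\sigma(\boldsymbol Z')\boldsymbol D^{1/2}\boldsymbol X\|}{\|\boldsymbol Z\boldsymbol D^{1/2}\boldsymbol X\|}\ge\delta_{\boldsymbol M}\frac{\gamma_1}{\gamma_2'}\,\frac{\|\sigma(\boldsymbol Z')\boldsymbol D^{1/2}\boldsymbol Y\|}{\|\boldsymbol Z\boldsymbol D^{1/2}\boldsymbol Y\|}.$$
   Context: $\mathcal G$ is a connected undirected graph on $[c]$ with (0/1) adjacency matrix $\widetilde{\boldsymbol W}$ and stationary distribution $\boldsymbol\pi$ of its random walk (all $\pi_x>0$). $\boldsymbol W=\{w_{x,y}\}$ with $w_{x,y}=\widetilde w_{x,y}\pi_x\pi_y$, $d_x=\sum_yw_{x,y}$, $\boldsymbol D=\mathrm{diag}(d_1,\dots,d_c)$. $\|\cdot\|$ is the Frobenius norm. For $\sigma:\mathbb R^d\to\mathbb R^d$ and $\boldsymbol Z\in\mathbb R^{d\times c}$, $\sigma(\boldsymbol Z)$ means $\sigma$ applied to each column. Great mapping: for a set $\mathscr Z\subseteq\mathbb R^{d\times c}$, a matrix $\boldsymbol U\in\mathbb R^{c\times p}$ with orthonormal columns, and scalars $\gamma_1,\gamma_2>0$, a function $\sigma:\mathbb R^d\to\mathbb R^d$ is a great mapping w.r.t. $(\gamma_1,\gamma_2,\mathscr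 Z,\boldsymbol U)$ if for all $\boldsymbol Z\in\mathscr Z$, $\gamma_1\|\boldsymbol Z\boldsymbol D^{1/2}\boldsymbol U\|\le\|\sigma(\boldsymbol Z)\boldsymbol D^{1/2}\boldsymbol U\|\le\gamma_2\|\boldsymbol Z\boldsymbol D^{1/2}\boldsymbol U\|$. *)

theory Defs
  imports "HOL-Analysis.Analysis"
begin

text \<open>Vertices of the graph are the elements of a finite type 'c (so c = CARD('c)).  A d x c matrix Z is given by its columns
  Z :: 'c => real^'d.  A c x p matrix U with columns indexed by a finite set J of naturals
  is given as U :: 'c => nat => real (entry (x,j)).\<close>

definition graph_degree :: "('c::finite \<Rightarrow> 'c \<Rightarrow> real) \<Rightarrow> 'c \<Rightarrow> real" where
  "graph_degree A x = (\<Sum>y\<in>UNIV. A x y)"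

definition adjacency_01_sym :: "('c::finite \<Rightarrow> 'c \<Rightarrow> real) \<Rightarrow> bool" where
  "adjacency_01_sym A \<longleftrightarrow> (\<forall>x y. A x y = 0 \<or> A x y = 1) \<and> (\<forall>x y. A x y = A y x)"

definition graph_connected :: "('c::finite \<Rightarrow> 'c \<Rightarrow> real) \<Rightarrow> bool" where
  "graph_connected A \<longleftrightarrow> (\<forall>x y. (\<lambda>u v. A u v = 1)\<^sup>*\<^sup>* x y)"

definition stationary_dist :: "('c::finite \<Rightarrow> 'c \<Rightarrow> real) \<Rightarrow> ('c \<Rightarrow> real) \<Rightarrow> bool" where
  "stationary_dist A \<pi> \<longleftrightarrow> (\<forall>x. \<pi> x > 0) \<and> (\<Sum>x\<in>UNIV. \<pi> x) = 1 \<and>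
     (\<forall>y. (\<Sum>x\<in>UNIV. \<pi> x * (A x y / graph_degree A x)) = \<pi> y)"

definition weight :: "('c::finite \<Rightarrow> 'c \<Rightarrow> real) \<Rightarrow> ('c \<Rightarrow> real) \<Rightarrow> 'c \<Rightarrow> 'c \<Rightarrow> real" where
  "weight A \<pi> x y = A x y * \<pi> x * \<pi> y"

definition wdeg :: "('c::finite \<Rightarrow> 'c \<Rightarrow> real) \<Rightarrow> ('c \<Rightarrow> real) \<Rightarrow> 'c \<Rightarrow> real" where
  "wdeg A \<pi> x = (\<Sum>y\<in>UNIV. weight A \<pi> x y)"

text \<open>Column j of the d x p matrix Z D^(1/2) U (dg = the diagonal of D).\<close>
definition ZDU :: "('c::finite \<Rightarrow> real^'d) \<Rightarrow> ('c \<Rightarrow> real) \<Rightarrow> ('c \<Rightarrow> nat \<Rightarrow> real) \<Rightarrow> nat \<Rightarrow> real^'d" where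
  "ZDU Z dg U j = (\<Sum>x\<in>UNIV. (sqrt (dg x) * U x j) *\<^sub>R Z x)"

definition frob :: "nat set \<Rightarrow> (nat \<Rightarrow> real^'d) \<Rightarrow> real" where
  "frob J B = sqrt (\<Sum>j\<in>J. (norm (B j))\<^sup>2)"

definition orthonormal_cols :: "('c::finite \<Rightarrow> nat \<Rightarrow> real) \<Rightarrow> nat set \<Rightarrow> bool" where
  "orthonormal_cols U J \<longleftrightarrow> (\<forall>i\<in>J. \<forall>j\<in>J. (\<Sum>x\<in>UNIV. U x i * U x j) = (if i = j then 1 else 0))"

definition great_mapping ::
  "('c::finite \<Rightarrow> real) \<Rightarrow> real \<Rightarrow> real \<Rightarrow> ('c \<Rightarrow> real^'d) set \<Rightarrow> ('c \<Rightarrow> nat \<Rightarrow> real) \<Rightarrow> nat set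
    \<Rightarrow> (real^'d \<Rightarrow> real^'d) \<Rightarrow> bool" where
  "great_mapping dg \<gamma>1 \<gamma>2 Zs U J \<sigma> \<longleftrightarrow> \<gamma>1 > 0 \<and> \<gamma>2 > 0 \<and> orthonormal_cols U J \<and>
     (\<forall>Z\<in>Zs. \<gamma>1 * frob J (ZDU Z dg U) \<le> frob J (ZDU (\<sigma> \<circ> Z) dg U) \<and>
              frob J (ZDU (\<sigma> \<circ> Z) dg U) \<le> \<gamma>2 * frob J (ZDU Z dg U))"

end

theory Submission
  imports Defs
begin

theorem corollary4:
  fixes A :: "'c::finite \<Rightarrow> 'c \<Rightarrow> real" and \<pi> :: "'c \<Rightarrow> real"
    and \<rho>A \<rho>B \<rho>O \<rho>T :: real and \<alpha> :: "'c \<Rightarrow> real" and v1 :: "real^'d"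
    and Z Z' :: "'c \<Rightarrow> real^'d"
    and V :: "'c \<Rightarrow> nat \<Rightarrow> real" and lam :: "nat \<Rightarrow> real" and q :: nat
    and \<sigma> :: "real^'d \<Rightarrow> real^'d" and \<gamma>1 \<gamma>2 \<gamma>1' \<gamma>2' :: real
  assumes graph: "adjacency_01_sym A" "graph_connected A"
    and stat: "stationary_dist A \<pi>"
    and rho: "\<rho>A > 0" "\<rho>B > 0" "\<rho>O > 0" "\<rho>T > 0"
    and Z'_def: "\<And>x. Z' x = \<rho>A *\<^sub>R Z x
        + (\<rho>B / wdeg A \<pi> x) *\<^sub>R (\<Sum>y\<in>UNIV. weight A \<pi> x y *\<^sub>R Z y)
        + \<rho>O *\<^sub>R (\<Sum>y\<in>UNIV. \<alpha> y *\<^sub>R Z y) + \<rho>T *\<^sub>R v1"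
    and q: "2 \<le> q" "q < CARD('c)"
    and V_orth: "orthonormal_cols V {1..CARD('c)}"
    and eig: "\<And>x y. \<rho>A * (if x = y then 1 else 0)
          + \<rho>B * weight A \<pi> x y / (sqrt (wdeg A \<pi> x) * sqrt (wdeg A \<pi> y))
        = (\<Sum>i = 1..CARD('c). V x i * lam i * V y i)"
    and sorted: "\<And>i j. 1 \<le> i \<Longrightarrow> i \<le> j \<Longrightarrow> j \<le> CARD('c) \<Longrightarrow> \<bar>lam j\<bar> \<le> \<bar>lam i\<bar>"
    and gmX: "great_mapping (wdeg A \<pi>) \<gamma>1 \<gamma>2 {Z'} V {2..q} \<sigma>"
    and gmY: "great_mapping (wdeg A \<pi>) \<gamma>1' \<gamma>2' {Z'} V {q+1..CARD('c)} \<sigma>"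
    and nz: "lam (q+1) \<noteq> 0"
      "frob {2..q} (ZDU Z (wdeg A \<pi>) V) \<noteq> 0"
      "frob {q+1..CARD('c)} (ZDU Z (wdeg A \<pi>) V) \<noteq> 0"
  shows "frob {2..q} (ZDU (\<sigma> \<circ> Z') (wdeg A \<pi>) V) / frob {2..q} (ZDU Z (wdeg A \<pi>) V)
     \<ge> \<bar>lam q / lam (q+1)\<bar> * (\<gamma>1 / \<gamma>2')
       * (frob {q+1..CARD('c)} (ZDU (\<sigma> \<circ> Z') (wdeg A \<pi>) V)
          / frob {q+1..CARD('c)} (ZDU Z (wdeg A \<pi>) V))"
proof -
  define d where "d = wdeg A \<pi>"
  define w where "w = weight A \<pi>"
  define s where "s = (\<lambda>x. sqrt (d x))"
  define n where "n = CARD('c)"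
  define M where "M = (\<lambda>x y. \<rho>A * (if x = y then 1 else 0) + \<rho>B * w x y / (sqrt (d x) * sqrt (d y)))"
  have Asym: "\<And>x y. A x y = A y x" and A01: "\<And>x y. A x y = 0 \<or> A x y = 1"
    using graph(1) unfolding adjacency_01_sym_def by auto
  have pipos: "\<And>x. \<pi> x > 0" using stat unfolding stationary_dist_def by auto
  have wsym: "\<And>x y. w x y = w y x" unfolding w_def weight_def using Asym
    by (simp add: mult.commute mult.left_commute)
  have wnn: "\<And>x y. w x y \<ge> 0"
  proof -
    fix x y
    have "A x y \<ge> 0" using A01[of x y] by auto
    then show "w x y \<ge> 0" unfolding w_def weight_def using pipos[of x] pipos[of y] by simp
  qed
  have wpos: "\<And>x y. A x y = 1 \<Longrightarrow> w x y > 0"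
    unfolding w_def weight_def using pipos by simp
  have dsum: "\<And>x. d x = (\<Sum>y\<in>UNIV. w x y)" unfolding d_def w_def wdeg_def by simp
  have n3: "n \<ge> 3" using q unfolding n_def by simp
  have dpos: "\<And>x. d x > 0"
  proof -
    fix x :: 'c
    have "UNIV \<noteq> {x}"
    proof
      assume "UNIV = {x}"
      then have "card (UNIV::'c set) = card {x}" by (rule arg_cong)
      then have "n = 1" unfolding n_def by simp
      then show False using n3 by simp
    qed
    then obtain y where "y \<noteq> x" by blast
    have conn: "(\<lambda>u v. A u v = 1)\<^sup>*\<^sup>* x y" using graph(2) unfolding graph_connected_def by auto
    have "x = y \<or> (\<exists>z. A x z = 1)" using conn by (cases rule: converse_rtranclpE) auto
    then obtain z where z: "A x z = 1" using \<open>y \<noteq> x\<close> by blast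
    have wz: "0 < w x z" using wpos[OF z] .
    show "d x > 0" unfolding dsum
      by (rule sum_pos2[of UNIV z]) (simp_all add: wnn wz)
  qed
  have spos: "\<And>x. s x > 0" unfolding s_def using dpos by simp
  have ssq: "\<And>x. s x * s x = d x" unfolding s_def using dpos by (simp add: less_imp_le)
  have ssq2: "\<And>x. (s x)\<^sup>2 = d x" using ssq by (simp add: power2_eq_square)
  have eigM: "\<And>x y. M x y = (\<Sum>i=1..n. V x i * lam i * V y i)"
    using eig unfolding M_def d_def w_def n_def by simp
  have Msym: "\<And>x y. M x y = M y x" unfolding M_def using wsym by (simp add: mult.commute)
  have orth: "\<And>i j. i \<in> {1..n} \<Longrightarrow> j \<in> {1..n} \<Longrightarrow> (\<Sum>x\<in>UNIV. V x i * V x j) = (if i = j then 1 else 0)"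
    using V_orth unfolding orthonormal_cols_def n_def by blast
  have eigV: "(\<Sum>y\<in>UNIV. M x y * V y j) = lam j * V x j" if j: "j \<in> {1..n}" for x j
  proof -
    have "(\<Sum>y\<in>UNIV. M x y * V y j) = (\<Sum>y\<in>UNIV. \<Sum>i=1..n. V x i * lam i * (V y i * V y j))"
      by (simp add: eigM sum_distrib_right mult.assoc)
    also have "\<dots> = (\<Sum>i=1..n. V x i * lam i * (\<Sum>y\<in>UNIV. V y i * V y j))"
      by (subst sum.swap) (simp add: sum_distrib_left)
    also have "\<dots> = (\<Sum>i=1..n. V x i * lam i * (if i = j then 1 else 0))"
      using orth j by (intro sum.cong) auto
    also have "\<dots> = lam j * V x j" using j by (simp add: if_distrib[of "\<lambda>t. V x _ * lam _ * t"] cong: if_cong)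
    finally show ?thesis .
  qed
  have dne: "\<And>x. d x \<noteq> 0" using dpos by (metis less_irrefl)
  have M': "\<And>x y. M x y = \<rho>A * (if x = y then 1 else 0) + \<rho>B * w x y / (s x * s y)"
    unfolding M_def s_def by simp
  have dg2: "(\<Sum>x\<in>UNIV. \<Sum>y\<in>UNIV. w x y * (g y)\<^sup>2) = (\<Sum>x\<in>UNIV. d x * (g x)\<^sup>2)" for g
  proof -
    have "(\<Sum>x\<in>UNIV. \<Sum>y\<in>UNIV. w x y * (g y)\<^sup>2) = (\<Sum>y\<in>UNIV. \<Sum>x\<in>UNIV. w x y * (g y)\<^sup>2)"
      by (rule sum.swap)
    also have "\<dots> = (\<Sum>y\<in>UNIV. \<Sum>x\<in>UNIV. w y x * (g y)\<^sup>2)"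
      by (intro sum.cong refl) (metis wsym)
    also have "\<dots> = (\<Sum>x\<in>UNIV. d x * (g x)\<^sup>2)" by (simp add: dsum sum_distrib_right)
    finally show ?thesis .
  qed
  have dg1: "(\<Sum>x\<in>UNIV. \<Sum>y\<in>UNIV. w x y * (g x)\<^sup>2) = (\<Sum>x\<in>UNIV. d x * (g x)\<^sup>2)" for g
    by (simp add: dsum sum_distrib_right)
  have qminus: "(\<Sum>x\<in>UNIV. \<Sum>y\<in>UNIV. w x y * (g x - g y)\<^sup>2)
      = 2 * (\<Sum>x\<in>UNIV. d x * (g x)\<^sup>2) - 2 * (\<Sum>x\<in>UNIV. \<Sum>y\<in>UNIV. w x y * g x * g y)" for g
  proof -
    have "(\<Sum>x\<in>UNIV. \<Sum>y\<in>UNIV. w x y * (g x - g y)\<^sup>2)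
      = (\<Sum>x\<in>UNIV. \<Sum>y\<in>UNIV. w x y * (g x)\<^sup>2 + w x y * (g y)\<^sup>2 - 2 * (w x y * g x * g y))"
      by (intro sum.cong refl) (simp add: power2_diff algebra_simps)
    also have "\<dots> = (\<Sum>x\<in>UNIV. \<Sum>y\<in>UNIV. w x y * (g x)\<^sup>2) + (\<Sum>x\<in>UNIV. \<Sum>y\<in>UNIV. w x y * (g y)\<^sup>2)
        - 2 * (\<Sum>x\<in>UNIV. \<Sum>y\<in>UNIV. w x y * g x * g y)"
      by (simp add: sum.distrib sum_subtractf sum_distrib_left)
    finally show ?thesis using dg1 dg2 by simp
  qed
  have qplus: "(\<Sum>x\<in>UNIV. \<Sum>y\<in>UNIV. w x y * (g x + g y)\<^sup>2)
      = 2 * (\<Sum>x\<in>UNIV. d x * (g x)\<^sup>2) + 2 * (\<Sum>x\<in>UNIV. \<Sum>y\<in>UNIV. w x y * g x * g y)" for g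
  proof -
    have "(\<Sum>x\<in>UNIV. \<Sum>y\<in>UNIV. w x y * (g x + g y)\<^sup>2)
      = (\<Sum>x\<in>UNIV. \<Sum>y\<in>UNIV. w x y * (g x)\<^sup>2 + w x y * (g y)\<^sup>2 + 2 * (w x y * g x * g y))"
      by (intro sum.cong refl) (simp add: power2_sum algebra_simps)
    also have "\<dots> = (\<Sum>x\<in>UNIV. \<Sum>y\<in>UNIV. w x y * (g x)\<^sup>2) + (\<Sum>x\<in>UNIV. \<Sum>y\<in>UNIV. w x y * (g y)\<^sup>2)
        + 2 * (\<Sum>x\<in>UNIV. \<Sum>y\<in>UNIV. w x y * g x * g y)"
      by (simp add: sum.distrib sum_distrib_left)
    finally show ?thesis using dg1 dg2 by simp
  qed
  have ray: "(\<Sum>x\<in>UNIV. u x * (\<Sum>y\<in>UNIV. M x y * u y))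
      = \<rho>A * (\<Sum>x\<in>UNIV. (u x)\<^sup>2) + \<rho>B * (\<Sum>x\<in>UNIV. \<Sum>y\<in>UNIV. w x y * (u x / s x) * (u y / s y))" for u
  proof -
    have "(\<Sum>x\<in>UNIV. u x * (\<Sum>y\<in>UNIV. M x y * u y))
       = (\<Sum>x\<in>UNIV. \<Sum>y\<in>UNIV. (if x = y then \<rho>A * (u x * u y) else 0) + \<rho>B * (w x y * (u x / s x) * (u y / s y)))"
      unfolding sum_distrib_left by (intro sum.cong refl) (simp add: M' algebra_simps)
    also have "\<dots> = (\<Sum>x\<in>UNIV. \<rho>A * (u x)\<^sup>2)
        + \<rho>B * (\<Sum>x\<in>UNIV. \<Sum>y\<in>UNIV. w x y * (u x / s x) * (u y / s y))"
      by (simp add: sum.distrib sum_distrib_left power2_eq_square)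
    finally show ?thesis by (simp add: sum_distrib_left)
  qed
  have top: "\<mu> = \<rho>A + \<rho>B \<and> (\<exists>b. \<forall>x. u x = b * s x)"
    if u1: "(\<Sum>x\<in>UNIV. (u x)\<^sup>2) = 1" and ue: "\<And>x. (\<Sum>y\<in>UNIV. M x y * u y) = \<mu> * u x"
      and ub: "\<bar>\<mu>\<bar> \<ge> \<rho>A + \<rho>B" for u \<mu>
  proof -
    define g where "g x = u x / s x" for x
    have ug: "u x = g x * s x" for x using spos[of x] by (simp add: g_def)
    define Q where "Q = (\<Sum>x\<in>UNIV. \<Sum>y\<in>UNIV. w x y * g x * g y)"
    have dg: "(\<Sum>x\<in>UNIV. d x * (g x)\<^sup>2) = 1"
    proof -
      have "(\<Sum>x\<in>UNIV. d x * (g x)\<^sup>2) = (\<Sum>x\<in>UNIV. (u x)\<^sup>2)"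
        by (intro sum.cong refl) (simp add: ug power_mult_distrib ssq2)
      then show ?thesis using u1 by simp
    qed
    have "\<mu> = \<mu> * (\<Sum>x\<in>UNIV. (u x)\<^sup>2)" using u1 by simp
    also have "\<dots> = (\<Sum>x\<in>UNIV. u x * (\<mu> * u x))"
      by (simp add: sum_distrib_left power2_eq_square algebra_simps)
    also have "\<dots> = (\<Sum>x\<in>UNIV. u x * (\<Sum>y\<in>UNIV. M x y * u y))" by (simp add: ue)
    also have "\<dots> = \<rho>A + \<rho>B * Q" unfolding ray u1 Q_def g_def by (simp add: mult.assoc)
    finally have muQ: "\<mu> = \<rho>A + \<rho>B * Q" .
    have "0 \<le> (\<Sum>x\<in>UNIV. \<Sum>y\<in>UNIV. w x y * (g x - g y)\<^sup>2)"
      by (intro sum_nonneg) (simp add: wnn)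
    then have Qle: "Q \<le> 1" unfolding qminus dg Q_def by simp
    have "0 \<le> (\<Sum>x\<in>UNIV. \<Sum>y\<in>UNIV. w x y * (g x + g y)\<^sup>2)"
      by (intro sum_nonneg) (simp add: wnn)
    then have Qge: "-1 \<le> Q" unfolding qplus dg Q_def by simp
    have h1: "\<rho>B * Q \<le> \<rho>B * 1" using Qle rho(2) by (intro mult_left_mono) auto
    have h2: "\<rho>B * (-1) \<le> \<rho>B * Q" using Qge rho(2) by (intro mult_left_mono) auto
    have "\<rho>B * Q = \<rho>B * 1" using h1 h2 muQ ub rho(1) rho(2) by linarith
    then have Q1: "Q = 1" using rho(2) by simp
    then have mu: "\<mu> = \<rho>A + \<rho>B" using muQ by simp
    have "(\<Sum>x\<in>UNIV. \<Sum>y\<in>UNIV. w x y * (g x - g y)\<^sup>2) = 0"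
      unfolding qminus dg using Q1 unfolding Q_def by simp
    then have "\<forall>x\<in>UNIV. (\<Sum>y\<in>UNIV. w x y * (g x - g y)\<^sup>2) = 0"
      by (subst (asm) sum_nonneg_eq_0_iff) (auto intro!: sum_nonneg simp: wnn)
    then have z0: "w x y * (g x - g y)\<^sup>2 = 0" for x y
      by (subst (asm) sum_nonneg_eq_0_iff) (auto simp: wnn)
    have edge: "g x = g y" if "A x y = 1" for x y
      using z0[of x y] wpos[OF that] by simp
    have gc: "g x = g y" if "(\<lambda>u v. A u v = 1)\<^sup>*\<^sup>* x y" for x y
      using that by (induction rule: rtranclp_induct) (auto dest: edge)
    have "\<forall>x. u x = g undefined * s x"
      using gc graph(2) ug unfolding graph_connected_def by metis
    then show ?thesis using mu by blast
  qed
  have snz: "\<And>x. s x \<noteq> 0" using spos by (metis less_irrefl)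
  have seig: "(\<Sum>y\<in>UNIV. M x y * s y) = (\<rho>A + \<rho>B) * s x" for x
  proof -
    have "(\<Sum>y\<in>UNIV. M x y * s y) = (\<Sum>y\<in>UNIV. (if x = y then \<rho>A * s y else 0) + \<rho>B / s x * w x y)"
      by (intro sum.cong refl) (simp add: M' field_simps snz)
    also have "\<dots> = \<rho>A * s x + \<rho>B / s x * d x" by (simp add: sum.distrib dsum sum_distrib_left)
    also have "\<dots> = (\<rho>A + \<rho>B) * s x" using spos[of x] by (simp add: ssq[symmetric] field_simps)
    finally show ?thesis .
  qed
  define cc where "cc j = (\<Sum>x\<in>UNIV. s x * V x j)" for j
  have ccl: "(\<rho>A + \<rho>B) * cc j = lam j * cc j" if j: "j \<in> {1..n}" for j
  proof -
    have "(\<rho>A + \<rho>B) * cc j = (\<Sum>x\<in>UNIV. (\<Sum>y\<in>UNIV. M x y * s y) * V x j)"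
      by (simp add: cc_def seig sum_distrib_left mult.assoc)
    also have "\<dots> = (\<Sum>x\<in>UNIV. \<Sum>y\<in>UNIV. M x y * s y * V x j)" by (simp add: sum_distrib_right)
    also have "\<dots> = (\<Sum>y\<in>UNIV. \<Sum>x\<in>UNIV. M x y * s y * V x j)" by (rule sum.swap)
    also have "\<dots> = (\<Sum>y\<in>UNIV. s y * (\<Sum>x\<in>UNIV. M y x * V x j))"
      unfolding sum_distrib_left by (intro sum.cong refl) (metis Msym mult.commute mult.left_commute)
    also have "\<dots> = (\<Sum>y\<in>UNIV. s y * (lam j * V y j))" using eigV[OF j] by simp
    also have "\<dots> = lam j * cc j" by (simp add: cc_def sum_distrib_left algebra_simps)
    finally show ?thesis .
  qed
  have V1: "(\<Sum>x\<in>UNIV. (V x i)\<^sup>2) = 1" if "i \<in> {1..n}" for i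
    using orth[OF that that] by (simp add: power2_eq_square)
  have cc0: "cc j = 0" if j: "j \<in> {2..n}" for j
  proof (rule ccontr)
    assume ne: "cc j \<noteq> 0"
    have j1: "j \<in> {1..n}" using j by auto
    have one: "1 \<in> {1..n}" using n3 by auto
    have lj: "lam j = \<rho>A + \<rho>B" using ccl[OF j1] ne by simp
    have "\<bar>lam j\<bar> \<le> \<bar>lam 1\<bar>" using sorted[of 1 j] j unfolding n_def by auto
    then have l1: "\<bar>lam 1\<bar> \<ge> \<rho>A + \<rho>B" using lj by simp
    have lj': "\<bar>lam j\<bar> \<ge> \<rho>A + \<rho>B" using lj rho by simp
    obtain b1 where b1: "\<forall>x. V x 1 = b1 * s x"
      using top[of "\<lambda>x. V x 1" "lam 1"] V1[OF one] eigV[OF one] l1 by blast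
    obtain bj where bj: "\<forall>x. V x j = bj * s x"
      using top[of "\<lambda>x. V x j" "lam j"] V1[OF j1] eigV[OF j1] lj' by blast
    define S where "S = (\<Sum>x\<in>UNIV. (s x)\<^sup>2)"
    have "b1 * bj * S = 0" using orth[OF one j1] j b1 bj
      by (simp add: S_def sum_distrib_left power2_eq_square algebra_simps)
    moreover have "b1 * b1 * S = 1" using V1[OF one] b1
      by (simp add: S_def sum_distrib_left power2_eq_square algebra_simps)
    moreover have "bj * bj * S = 1" using V1[OF j1] bj
      by (simp add: S_def sum_distrib_left power2_eq_square algebra_simps)
    moreover have "(b1 * b1 * S) * (bj * bj * S) = (b1 * bj * S) * (b1 * bj * S)" by algebra
    ultimately have "(1::real) = 0" by (metis mult_zero_left mult_1)
    then show False by simp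
  qed
  define K where "K = \<rho>O *\<^sub>R (\<Sum>y\<in>UNIV. \<alpha> y *\<^sub>R Z y) + \<rho>T *\<^sub>R v1"
  have Z'e: "Z' x = \<rho>A *\<^sub>R Z x + (\<rho>B / d x) *\<^sub>R (\<Sum>y\<in>UNIV. w x y *\<^sub>R Z y) + K" for x
    using Z'_def[of x] unfolding d_def w_def K_def by (simp add: add.assoc)
  have zdu: "ZDU Z' d V j = lam j *\<^sub>R ZDU Z d V j" if j: "j \<in> {2..n}" for j
  proof -
    have j1: "j \<in> {1..n}" using j by auto
    have coef: "s y * V y j * \<rho>A + (\<Sum>x\<in>UNIV. s x * V x j * (\<rho>B / d x) * w x y) = s y * lam j * V y j" for y
    proof -
      have "s y * (\<Sum>x\<in>UNIV. M y x * V x j)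
          = (\<Sum>x\<in>UNIV. (if y = x then s y * V y j * \<rho>A else 0) + s x * V x j * (\<rho>B / d x) * w x y)"
        unfolding sum_distrib_left by (intro sum.cong refl) (simp add: M' ssq[symmetric] field_simps snz wsym)
      then have "s y * V y j * \<rho>A + (\<Sum>x\<in>UNIV. s x * V x j * (\<rho>B / d x) * w x y) = s y * (\<Sum>x\<in>UNIV. M y x * V x j)"
        by (simp add: sum.distrib)
      also have "\<dots> = s y * lam j * V y j" using eigV[OF j1] by simp
      finally show ?thesis .
    qed
    have "ZDU Z' d V j = (\<Sum>x\<in>UNIV. (s x * V x j) *\<^sub>R Z' x)" unfolding ZDU_def s_def ..
    also have "\<dots> = (\<Sum>x\<in>UNIV. (s x * V x j * \<rho>A) *\<^sub>R Z x)
        + (\<Sum>x\<in>UNIV. \<Sum>y\<in>UNIV. (s x * V x j * (\<rho>B / d x) * w x y) *\<^sub>R Z y) + cc j *\<^sub>R K"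
      by (simp add: Z'e scaleR_add_right sum.distrib scaleR_sum_right scaleR_sum_left cc_def mult.assoc)
    also have "(\<Sum>x\<in>UNIV. \<Sum>y\<in>UNIV. (s x * V x j * (\<rho>B / d x) * w x y) *\<^sub>R Z y)
        = (\<Sum>y\<in>UNIV. (\<Sum>x\<in>UNIV. s x * V x j * (\<rho>B / d x) * w x y) *\<^sub>R Z y)"
      by (subst sum.swap) (simp add: scaleR_sum_left)
    also have "(\<Sum>x\<in>UNIV. (s x * V x j * \<rho>A) *\<^sub>R Z x) + (\<Sum>y\<in>UNIV. (\<Sum>x\<in>UNIV. s x * V x j * (\<rho>B / d x) * w x y) *\<^sub>R Z y)
        = (\<Sum>y\<in>UNIV. (s y * V y j * \<rho>A + (\<Sum>x\<in>UNIV. s x * V x j * (\<rho>B / d x) * w x y)) *\<^sub>R Z y)"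
      by (simp add: sum.distrib scaleR_add_left)
    also have "\<dots> = (\<Sum>y\<in>UNIV. (s y * lam j * V y j) *\<^sub>R Z y)" by (simp only: coef)
    also have "\<dots> = lam j *\<^sub>R ZDU Z d V j"
      unfolding ZDU_def s_def by (simp add: scaleR_sum_right algebra_simps)
    finally show ?thesis using cc0[OF j] by simp
  qed
  define B where "B = ZDU Z d V"
  have frobsc: "frob J (ZDU Z' d V) = sqrt (\<Sum>j\<in>J. (lam j)\<^sup>2 * (norm (B j))\<^sup>2)" if "J \<subseteq> {2..n}" for J
    unfolding frob_def B_def using that
    by (intro arg_cong[where f=sqrt] sum.cong refl) (auto simp: zdu power_mult_distrib)
  have frobnn: "frob J F \<ge> 0" for J and F :: "nat \<Rightarrow> real^'d"
    unfolding frob_def by (simp add: sum_nonneg)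
  have lowX: "\<bar>lam q\<bar> * frob {2..q} B \<le> frob {2..q} (ZDU Z' d V)"
  proof -
    have "(lam q)\<^sup>2 * (\<Sum>j\<in>{2..q}. (norm (B j))\<^sup>2) \<le> (\<Sum>j\<in>{2..q}. (lam j)\<^sup>2 * (norm (B j))\<^sup>2)"
      unfolding sum_distrib_left
    proof (rule sum_mono)
      fix j assume "j \<in> {2..q}"
      then have "\<bar>lam q\<bar> \<le> \<bar>lam j\<bar>" using sorted[of j q] q by auto
      then have "(lam q)\<^sup>2 \<le> (lam j)\<^sup>2" by (simp add: abs_le_square_iff)
      then show "(lam q)\<^sup>2 * (norm (B j))\<^sup>2 \<le> (lam j)\<^sup>2 * (norm (B j))\<^sup>2" by (simp add: mult_right_mono)
    qed
    then have "sqrt ((lam q)\<^sup>2 * (\<Sum>j\<in>{2..q}. (norm (B j))\<^sup>2)) \<le> sqrt (\<Sum>j\<in>{2..q}. (lam j)\<^sup>2 * (norm (B j))\<^sup>2)"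
      by (rule real_sqrt_le_mono)
    moreover have "{2..q} \<subseteq> {2..n}" using q unfolding n_def by auto
    ultimately show ?thesis using frobsc[of "{2..q}"] unfolding frob_def by (simp add: real_sqrt_mult)
  qed
  have upY: "frob {q+1..n} (ZDU Z' d V) \<le> \<bar>lam (q+1)\<bar> * frob {q+1..n} B"
  proof -
    have "(\<Sum>j\<in>{q+1..n}. (lam j)\<^sup>2 * (norm (B j))\<^sup>2) \<le> (lam (q+1))\<^sup>2 * (\<Sum>j\<in>{q+1..n}. (norm (B j))\<^sup>2)"
      unfolding sum_distrib_left
    proof (rule sum_mono)
      fix j assume "j \<in> {q+1..n}"
      then have "\<bar>lam j\<bar> \<le> \<bar>lam (q+1)\<bar>" using sorted[of "q+1" j] q unfolding n_def by auto
      then have "(lam j)\<^sup>2 \<le> (lam (q+1))\<^sup>2" by (simp add: abs_le_square_iff)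
      then show "(lam j)\<^sup>2 * (norm (B j))\<^sup>2 \<le> (lam (q+1))\<^sup>2 * (norm (B j))\<^sup>2" by (simp add: mult_right_mono)
    qed
    then have "sqrt (\<Sum>j\<in>{q+1..n}. (lam j)\<^sup>2 * (norm (B j))\<^sup>2) \<le> sqrt ((lam (q+1))\<^sup>2 * (\<Sum>j\<in>{q+1..n}. (norm (B j))\<^sup>2))"
      by (rule real_sqrt_le_mono)
    moreover have "{q+1..n} \<subseteq> {2..n}" using q unfolding n_def by auto
    ultimately show ?thesis using frobsc[of "{q+1..n}"] unfolding frob_def by (simp add: real_sqrt_mult)
  qed
  have gX: "\<gamma>1 * frob {2..q} (ZDU Z' d V) \<le> frob {2..q} (ZDU (\<sigma> \<circ> Z') d V)" "\<gamma>1 > 0"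
    using gmX unfolding great_mapping_def d_def by auto
  have gY: "frob {q+1..n} (ZDU (\<sigma> \<circ> Z') d V) \<le> \<gamma>2' * frob {q+1..n} (ZDU Z' d V)" "\<gamma>2' > 0"
    using gmY unfolding great_mapping_def d_def n_def by auto
  define a where "a = frob {2..q} (ZDU (\<sigma> \<circ> Z') d V)"
  define b where "b = frob {2..q} B"
  define e where "e = frob {q+1..n} (ZDU (\<sigma> \<circ> Z') d V)"
  define f where "f = frob {q+1..n} B"
  define lq where "lq = \<bar>lam q\<bar>"
  define lq1 where "lq1 = \<bar>lam (q+1)\<bar>"
  have bpos: "b > 0" using nz(2) frobnn[of "{2..q}" B] unfolding b_def B_def d_def by linarith
  have fpos: "f > 0" using nz(3) frobnn[of "{q+1..n}" B] unfolding f_def B_def d_def n_def by linarith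
  have lq1pos: "lq1 > 0" using nz(1) unfolding lq1_def by simp
  have lqnn: "lq \<ge> 0" unfolding lq_def by simp
  have enn: "e \<ge> 0" unfolding e_def by (rule frobnn)
  have ae: "\<gamma>1 * (lq * b) \<le> a"
  proof -
    have "\<gamma>1 * (lq * b) \<le> \<gamma>1 * frob {2..q} (ZDU Z' d V)"
      using lowX gX(2) unfolding lq_def b_def by (intro mult_left_mono) auto
    then show ?thesis using gX(1) unfolding a_def by linarith
  qed
  have ee: "e \<le> \<gamma>2' * (lq1 * f)"
  proof -
    have "\<gamma>2' * frob {q+1..n} (ZDU Z' d V) \<le> \<gamma>2' * (lq1 * f)"
      using upY gY(2) unfolding lq1_def f_def by (intro mult_left_mono) auto
    then show ?thesis using gY(1) unfolding e_def by linarith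
  qed
  have r1: "e / f \<le> \<gamma>2' * lq1" using ee fpos by (simp add: pos_divide_le_eq mult.assoc mult.commute mult.left_commute)
  have "lq / lq1 * (\<gamma>1 / \<gamma>2') * (e / f) \<le> lq / lq1 * (\<gamma>1 / \<gamma>2') * (\<gamma>2' * lq1)"
    using r1 lqnn lq1pos gX(2) gY(2) by (intro mult_left_mono) auto
  also have "\<dots> = \<gamma>1 * lq" using lq1pos gY(2) by (simp add: field_simps)
  also have "\<dots> \<le> a / b" using ae bpos by (simp add: pos_le_divide_eq mult.assoc)
  finally have fin: "lq / lq1 * (\<gamma>1 / \<gamma>2') * (e / f) \<le> a / b" .
  show ?thesis using fin unfolding a_def b_def e_def f_def lq_def lq1_def B_def d_def n_def
    by (simp add: abs_divide)
qed

end
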